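(* Let $h,p,K>0$, $H(x)=h\max(x,0)+p\max(-x,0)$, and $\delta(u)=1$ if $u>0$, $\delta(u)=0$ if $u=0$. Fix an initial inventory $x_0\in\mathbb{R}$ and an infinite demand sample path $\omega=(d_1,d_2,\dots)$ of nonnegative demands. For $N\ge1$ and $u_1\ge0$ let \[J_N(u_1,\omega)=H(x_1)+K\delta(u_1)+\min_{u_2,\dots,u_N\ge 0}\sum_{i=2}^N\big(H(x_i)+K\delta(u_i)\big),\quad x_i=x_{i-1}-d_i+u_i,\ i=1,\dots,N,\] and let $J(u_1,\omega)=\lim_{N\to\infty}\frac1N J_N(u_1,\omega)$, assumed to exist (finite) for every $u_1>0$. Then $J(u_1,\omega)$ is convex in $u_1$ on $u_1>0$.
   Context: Periodic-review inventory model with fixed setup cost $K$, holding cost rate $h$, backlog penalty rate $p$ and full backlogging; $J(u_1,\omega)$ is the infinite-horizon average cost along sample path $\omega$ when the first-period order is $u_1$ and later orders are chosen optimally. *)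

theory Defs
  imports "HOL-Analysis.Analysis"
begin

definition Hcost :: "real \<Rightarrow> real \<Rightarrow> real \<Rightarrow> real" where
  "Hcost h p x = h * max x 0 + p * max (- x) 0"

definition setup_ind :: "real \<Rightarrow> real" where
  "setup_ind u = (if u > 0 then 1 else 0)"

text \<open>Inventory level after period i: x_i = x_{i-1} - d_i + u_i, i.e.
  x_i = x0 + sum_{k=1..i} (u_k - d_k). Demands d and orders u are indexed from 1.\<close>
definition inv_level :: "real \<Rightarrow> (nat \<Rightarrow> real) \<Rightarrow> (nat \<Rightarrow> real) \<Rightarrow> nat \<Rightarrow> real" where
  "inv_level x0 d u i = x0 + (\<Sum>k=1..i. u k - d k)"

definition period_cost :: "real \<Rightarrow> real \<Rightarrow> real \<Rightarrow> real \<Rightarrow> (nat \<Rightarrow> real) \<Rightarrow> (nat \<Rightarrow> real) \<Rightarrow> nat \<Rightarrow> real" where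
  "period_cost h p K x0 d u i = Hcost h p (inv_level x0 d u i) + K * setup_ind (u i)"

text \<open>J_N(u1, omega): first order fixed to u1, orders u_2..u_N >= 0 chosen optimally
  (the minimum is written as an infimum over all nonnegative order sequences u with u 1 = u1;
  only u_2..u_N affect the value).\<close>
definition JN :: "real \<Rightarrow> real \<Rightarrow> real \<Rightarrow> real \<Rightarrow> (nat \<Rightarrow> real) \<Rightarrow> nat \<Rightarrow> real \<Rightarrow> real" where
  "JN h p K x0 d N u1 =
     (INF u \<in> {u. u 1 = u1 \<and> (\<forall>i. 0 \<le> u i)}. \<Sum>i=1..N. period_cost h p K x0 d u i)"

end

theory Submission
  imports Defs
begin

lemma Hcost_nonneg: "h \<ge> 0 \<Longrightarrow> p \<ge> 0 \<Longrightarrow> Hcost h p x \<ge> 0"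
  unfolding Hcost_def by simp

lemma Hcost_mono_neg: "h \<ge> 0 \<Longrightarrow> p \<ge> 0 \<Longrightarrow> x \<le> x' \<Longrightarrow> x' \<le> 0 \<Longrightarrow> Hcost h p x' \<le> Hcost h p x"
  unfolding Hcost_def by (simp add: mult_left_mono)

lemma Hcost_ge: "p \<ge> 0 \<Longrightarrow> h * max x 0 \<le> Hcost h p x"
  unfolding Hcost_def by simp

lemma pc_nonneg: "h \<ge> 0 \<Longrightarrow> p \<ge> 0 \<Longrightarrow> K \<ge> 0 \<Longrightarrow> period_cost h p K x0 d u i \<ge> 0"
  unfolding period_cost_def setup_ind_def using Hcost_nonneg by simp

lemma inv_eq: "inv_level x0 d u i = x0 + (\<Sum>k=1..i. u k) - (\<Sum>k=1..i. d k)"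
  by (simp add: inv_level_def sum_subtractf)

lemma JN_le:
  assumes "h \<ge> 0" "p \<ge> 0" "K \<ge> 0" "u 1 = a" "\<forall>i. 0 \<le> u i"
  shows "JN h p K x0 d N a \<le> (\<Sum>i=1..N. period_cost h p K x0 d u i)"
  unfolding JN_def
proof (rule cINF_lower)
  show "bdd_below ((\<lambda>u. \<Sum>i = 1..N. period_cost h p K x0 d u i) ` {u. u 1 = a \<and> (\<forall>i. 0 \<le> u i)})"
    by (rule bdd_belowI[where m=0]) (auto intro!: sum_nonneg pc_nonneg assms)
qed (use assms in auto)

lemma JN_ge:
  assumes "a \<ge> 0" "\<And>u. u 1 = a \<Longrightarrow> \<forall>i. 0 \<le> u i \<Longrightarrow> c \<le> (\<Sum>i=1..N. period_cost h p K x0 d u i)"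
  shows "c \<le> JN h p K x0 d N a"
  unfolding JN_def
proof (rule cINF_greatest)
  show "{u. u 1 = a \<and> (\<forall>i. 0 \<le> u i)} \<noteq> {}"
    using assms(1) by (auto intro!: exI[where x="\<lambda>i. if i = 1 then a else 0"])
qed (use assms in auto)

lemma sum_trunc:
  fixes c :: "nat \<Rightarrow> real"
  assumes "\<And>i. c i \<ge> 0" "\<And>i. i > M \<Longrightarrow> c i = 0"
  shows "(\<Sum>i=1..N. c i) \<le> (\<Sum>i=1..M. c i)"
proof -
  have "(\<Sum>i=1..N. c i) \<le> (\<Sum>i=1..max N M. c i)"
    by (rule sum_mono2) (auto simp: assms)
  also have "\<dots> = (\<Sum>i=1..M. c i)"
    by (rule sum.mono_neutral_right) (auto simp: assms)
  finally show ?thesis .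
qed

lemma lim_upper:
  fixes f g :: "nat \<Rightarrow> real"
  assumes "convergent f" "\<And>N. N \<ge> 1 \<Longrightarrow> f N \<le> C / real N + q"
  shows "lim f \<le> q"
proof -
  have "f \<longlonglongrightarrow> lim f" using assms(1) convergent_LIMSEQ_iff by auto
  moreover have "(\<lambda>N. C / real N + q) \<longlonglongrightarrow> 0 + q"
    by (intro tendsto_add lim_const_over_n tendsto_const)
  moreover have "\<exists>N0. \<forall>N\<ge>N0. f N \<le> C / real N + q" using assms(2) by auto
  ultimately have "lim f \<le> 0 + q" by (rule LIMSEQ_le)
  then show ?thesis by simp
qed

lemma lim_lower:
  fixes f g :: "nat \<Rightarrow> real"
  assumes "convergent f" "\<And>N. N \<ge> 1 \<Longrightarrow> q \<le> f N"
  shows "q \<le> lim f"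
proof -
  have F: "f \<longlonglongrightarrow> lim f" using assms(1) convergent_LIMSEQ_iff by auto
  have E: "\<exists>N0. \<forall>N\<ge>N0. q \<le> f N" using assms(2) by auto
  show ?thesis by (rule LIMSEQ_le[OF tendsto_const F E])
qed

lemma lim_mono_C:
  fixes f g :: "nat \<Rightarrow> real"
  assumes "convergent f" "convergent g" "\<And>N. f N \<le> g N + C / real N"
  shows "lim f \<le> lim g"
proof -
  have "f \<longlonglongrightarrow> lim f" using assms(1) convergent_LIMSEQ_iff by auto
  moreover have "(\<lambda>N. g N + C / real N) \<longlonglongrightarrow> lim g + 0"
    using assms(2) convergent_LIMSEQ_iff by (intro tendsto_add lim_const_over_n) auto
  moreover have "\<exists>N0. \<forall>N\<ge>N0. f N \<le> g N + C / real N" using assms(3) by auto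
  ultimately have "lim f \<le> lim g + 0" by (rule LIMSEQ_le)
  then show ?thesis by simp
qed


lemma case1:
  fixes h p K x0 a b :: real and d :: "nat \<Rightarrow> real"
  assumes hp: "h > 0" "p > 0" "K > 0"
    and dpos: "\<And>i. i \<ge> 1 \<Longrightarrow> d i \<ge> 0"
    and unb: "\<And>B. \<exists>i. B < (\<Sum>k=1..i. d k)"
    and ab: "a > 0" "b > 0"
  shows "\<exists>C. \<forall>N. JN h p K x0 d N a \<le> JN h p K x0 d N b + C"
proof -
  define S where "S i = (\<Sum>k=1..i. d k)" for i
  have Smono: "S i \<le> S j" if "i \<le> j" for i j
    unfolding S_def by (rule sum_mono2) (use that dpos in auto)
  obtain T1 where T1: "x0 + a < S T1" using unb unfolding S_def by blast
  define T where "T = max T1 2"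
  have T2: "T \<ge> 2" unfolding T_def by simp
  have ST: "x0 + a \<le> S i" if "i \<ge> T" for i
    using Smono[of T1 i] T1 that unfolding T_def by simp
  define c where "c i = (if i \<le> T then Hcost h p (x0 + a - S i) + K else 0)" for i
  have c0: "c i \<ge> 0" for i unfolding c_def using Hcost_nonneg[of h p] hp by simp
  show ?thesis
  proof (intro exI allI)
    fix N
    have "JN h p K x0 d N a - (\<Sum>i=1..T. c i) \<le> JN h p K x0 d N b"
    proof (rule JN_ge)
      show "0 \<le> b" using ab by simp
      fix u :: "nat \<Rightarrow> real" assume u1: "u 1 = b" and un: "\<forall>i. 0 \<le> u i"
      define U where "U i = (\<Sum>k=1..i. u k)" for i
      have Umono: "U i \<le> U j" if "i \<le> j" for i j
        unfolding U_def by (rule sum_mono2) (use that un in auto)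
      have USuc: "U (Suc i) = U i + u (Suc i)" for i unfolding U_def by simp
      define v where "v i = (if i = 1 then a else if i < T then 0 else if i = T then max 0 (U T - a)
          else max a (U i) - max a (U (i - 1)))" for i
      have Vsum: "(\<Sum>k=1..i. v k) = (if i < T then a else max a (U i))" if "i \<ge> 1" for i
        using that
      proof (induction i)
        case 0 then show ?case by simp
      next
        case (Suc n)
        show ?case
        proof (cases "n = 0")
          case True then show ?thesis using T2 by (simp add: v_def)
        next
          case False
          then have IH: "(\<Sum>k=1..n. v k) = (if n < T then a else max a (U n))" using Suc by simp
          have "(\<Sum>k=1..Suc n. v k) = (\<Sum>k=1..n. v k) + v (Suc n)" by simp
          then show ?thesis using IH False T2 by (auto simp: v_def)
        qed
      qed
      have v0: "0 \<le> v i" for i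
        using Umono[of "i - 1" i] ab by (auto simp: v_def)
      have vle: "v i \<le> u i" if "i > T" for i
      proof -
        have "U i = U (i - 1) + u i" using USuc[of "i - 1"] that T2 by simp
        moreover have "max a (U (i - 1) + u i) - max a (U (i - 1)) \<le> u i"
          using un[rule_format, of i] by (simp add: max_def)
        ultimately show ?thesis using that T2 by (simp add: v_def)
      qed
      have invv: "inv_level x0 d v i = x0 + (if i < T then a else max a (U i)) - S i" if "i \<ge> 1" for i
        using Vsum[OF that] by (simp add: inv_eq S_def)
      have invu: "inv_level x0 d u i = x0 + U i - S i" for i
        by (simp add: inv_eq S_def U_def)
      have per: "period_cost h p K x0 d v i \<le> period_cost h p K x0 d u i + c i" if "i \<ge> 1" for i
      proof (cases "i < T")
        case True
        have "period_cost h p K x0 d v i \<le> Hcost h p (x0 + a - S i) + K"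
          using True invv[OF that] hp by (simp add: period_cost_def setup_ind_def)
        moreover have "period_cost h p K x0 d u i \<ge> 0" using pc_nonneg hp by simp
        ultimately show ?thesis using True by (simp add: c_def)
      next
        case False
        have H: "Hcost h p (inv_level x0 d v i) \<le> Hcost h p (inv_level x0 d u i)"
        proof (cases "a \<le> U i")
          case True then show ?thesis using False invv[OF that] invu by simp
        next
          case F2: False
          show ?thesis using False F2 invv[OF that] invu ST[of i] hp
            by (intro Hcost_mono_neg) auto
        qed
        show ?thesis
        proof (cases "i = T")
          case True
          have "K * setup_ind (v i) \<le> c i" using True hp Hcost_nonneg[of h p]
            by (simp add: c_def setup_ind_def)
          moreover have "K * setup_ind (u i) \<ge> 0" using hp by (simp add: setup_ind_def)
          ultimately show ?thesis using H by (simp add: period_cost_def)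
        next
          case F3: False
          then have "i > T" using False by simp
          then have "K * setup_ind (v i) \<le> K * setup_ind (u i)"
            using vle[of i] v0[of i] hp by (simp add: setup_ind_def)
          then show ?thesis using H c0[of i] by (simp add: period_cost_def)
        qed
      qed
      have "JN h p K x0 d N a \<le> (\<Sum>i=1..N. period_cost h p K x0 d v i)"
        by (rule JN_le) (use hp v0 in \<open>auto simp: v_def\<close>)
      also have "\<dots> \<le> (\<Sum>i=1..N. period_cost h p K x0 d u i + c i)"
        by (rule sum_mono) (use per in auto)
      also have "\<dots> = (\<Sum>i=1..N. period_cost h p K x0 d u i) + (\<Sum>i=1..N. c i)"
        by (simp add: sum.distrib)
      also have "(\<Sum>i=1..N. c i) \<le> (\<Sum>i=1..T. c i)"
        by (rule sum_trunc) (auto simp: c0, simp add: c_def)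
      finally show "JN h p K x0 d N a - (\<Sum>i=1..T. c i) \<le> (\<Sum>i=1..N. period_cost h p K x0 d u i)"
        by simp
    qed
    then show "JN h p K x0 d N a \<le> JN h p K x0 d N b + (\<Sum>i=1..T. c i)" by simp
  qed
qed


lemma case2:
  fixes h p K x0 a D :: real and d :: "nat \<Rightarrow> real"
  assumes hp: "h > 0" "p > 0" "K > 0"
    and SD: "\<And>i. (\<Sum>k=1..i. d k) \<le> D"
    and Sconv: "\<And>e. e > 0 \<Longrightarrow> \<exists>M. \<forall>i\<ge>M. D - e < (\<Sum>k=1..i. d k)"
    and a: "a > 0"
    and conv: "convergent (\<lambda>N. JN h p K x0 d N a / real N)"
  shows "lim (\<lambda>N. JN h p K x0 d N a / real N) = h * max (x0 + a - D) 0"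
proof (rule antisym)
  define S where "S i = (\<Sum>k=1..i. d k)" for i
  define g0 where "g0 = max (x0 + a - D) 0"
  show "h * max (x0 + a - D) 0 \<le> lim (\<lambda>N. JN h p K x0 d N a / real N)"
  proof (rule lim_lower[OF conv])
    fix N :: nat assume N: "N \<ge> 1"
    have "real N * (h * g0) \<le> JN h p K x0 d N a"
    proof (rule JN_ge)
      show "0 \<le> a" using a by simp
      fix u :: "nat \<Rightarrow> real" assume u1: "u 1 = a" and un: "\<forall>i. 0 \<le> u i"
      have "h * g0 \<le> period_cost h p K x0 d u i" if "i \<in> {1..N}" for i
      proof -
        have "u 1 \<le> (\<Sum>k=1..i. u k)"
          by (rule member_le_sum) (use that un in auto)
        then have "x0 + a - D \<le> inv_level x0 d u i"
          using SD[of i] u1 by (simp add: inv_eq)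
        then have "h * g0 \<le> h * max (inv_level x0 d u i) 0"
          unfolding g0_def using hp by (intro mult_left_mono) auto
        also have "\<dots> \<le> Hcost h p (inv_level x0 d u i)" using Hcost_ge hp by simp
        finally show ?thesis using hp by (simp add: period_cost_def setup_ind_def)
      qed
      then have "(\<Sum>i=1..N. h * g0) \<le> (\<Sum>i=1..N. period_cost h p K x0 d u i)"
        by (rule sum_mono)
      then show "real N * (h * g0) \<le> (\<Sum>i=1..N. period_cost h p K x0 d u i)" by simp
    qed
    then show "h * max (x0 + a - D) 0 \<le> JN h p K x0 d N a / real N"
      using N unfolding g0_def by (simp add: field_simps)
  qed
  show "lim (\<lambda>N. JN h p K x0 d N a / real N) \<le> h * max (x0 + a - D) 0"
  proof (rule field_le_epsilon)
    fix e :: real assume e: "e > 0"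
    obtain M where M: "\<And>i. i \<ge> M \<Longrightarrow> D - e / h < S i"
      using Sconv[of "e / h"] e hp unfolding S_def by auto
    define w where "w i = (if i = 1 then a else if i = 2 then max 0 (D - (x0 + a)) else 0)" for i :: nat
    have w0: "0 \<le> w i" for i using a by (simp add: w_def)
    have wsum: "(\<Sum>k=1..i. w k) = a + max 0 (D - (x0 + a))" if "i \<ge> 2" for i
      using that
    proof (induction i rule: dec_induct)
      case base
      have "{1..2::nat} = {1,2}" by auto
      then show ?case by (simp add: w_def)
    next
      case (step n) then show ?case by (simp add: w_def)
    qed
    define M' where "M' = max M 3"
    define c where "c i = (if i < M' then period_cost h p K x0 d w i else 0)" for i
    have c0: "c i \<ge> 0" for i unfolding c_def using pc_nonneg hp by simp
    have per: "period_cost h p K x0 d w i \<le> c i + h * (g0 + e / h)" if "i \<ge> 1" for i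
    proof (cases "i < M'")
      case True
      have "0 \<le> h * (g0 + e / h)" using hp e unfolding g0_def by (intro mult_nonneg_nonneg) auto
      then show ?thesis using True by (simp add: c_def)
    next
      case False
      then have i3: "i \<ge> 3" "i \<ge> M" unfolding M'_def by auto
      have inv: "inv_level x0 d w i = max (x0 + a) D - S i"
        using wsum[of i] i3 by (simp add: inv_eq S_def max_def)
      have "S i \<le> D" using SD unfolding S_def by simp
      then have inv0: "inv_level x0 d w i \<ge> 0" using inv by simp
      have "inv_level x0 d w i \<le> g0 + e / h"
        using inv M[OF i3(2)] unfolding g0_def by (simp add: max_def)
      then have "Hcost h p (inv_level x0 d w i) \<le> h * (g0 + e / h)"
        using inv0 hp by (simp add: Hcost_def mult_left_mono)
      moreover have "w i = 0" using i3 by (simp add: w_def)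
      ultimately show ?thesis using False by (simp add: period_cost_def setup_ind_def c_def)
    qed
    have "lim (\<lambda>N. JN h p K x0 d N a / real N) \<le> h * (g0 + e / h)"
    proof (rule lim_upper[OF conv])
      fix N :: nat assume N: "N \<ge> 1"
      have "JN h p K x0 d N a \<le> (\<Sum>i=1..N. period_cost h p K x0 d w i)"
        by (rule JN_le) (use hp w0 in \<open>auto simp: w_def\<close>)
      also have "\<dots> \<le> (\<Sum>i=1..N. c i + h * (g0 + e / h))"
        by (rule sum_mono) (use per in auto)
      also have "\<dots> = (\<Sum>i=1..N. c i) + real N * (h * (g0 + e / h))"
        by (simp add: sum.distrib)
      also have "(\<Sum>i=1..N. c i) \<le> (\<Sum>i=1..M'. c i)"
        by (rule sum_trunc) (auto simp: c0, simp add: c_def)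
      finally have "JN h p K x0 d N a \<le> (\<Sum>i=1..M'. c i) + real N * (h * (g0 + e / h))" by simp
      then show "JN h p K x0 d N a / real N \<le> (\<Sum>i=1..M'. c i) / real N + h * (g0 + e / h)"
        using N by (simp add: field_simps)
    qed
    then show "lim (\<lambda>N. JN h p K x0 d N a / real N) \<le> h * max (x0 + a - D) 0 + e"
    proof -
      have "h * (g0 + e / h) = h * g0 + e" using hp by (simp add: field_simps)
      with \<open>lim (\<lambda>N. JN h p K x0 d N a / real N) \<le> h * (g0 + e / h)\<close> show ?thesis
        unfolding g0_def by simp
    qed
  qed
qed


lemma convex_on_eqI:
  fixes f g :: "real \<Rightarrow> real"
  assumes "convex_on A g" "convex A" "\<And>x. x \<in> A \<Longrightarrow> f x = g x"
  shows "convex_on A f"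
proof (rule convex_onI)
  fix t :: real and x y assume t: "0 < t" "t < 1" and xy: "x \<in> A" "y \<in> A"
  have m: "(1 - t) *\<^sub>R x + t *\<^sub>R y \<in> A" using assms(2) xy t by (simp add: convex_alt)
  show "f ((1 - t) *\<^sub>R x + t *\<^sub>R y) \<le> (1 - t) * f x + t * f y"
    using convex_onD[OF assms(1), of t x y] t xy m assms(3) by simp
qed (rule assms(2))

lemma convex_g:
  fixes h c :: real
  assumes "h > 0"
  shows "convex_on {0<..} (\<lambda>a. h * max (c + a) 0)"
proof (rule convex_onI)
  fix t x y :: real assume t: "0 < t" "t < 1" and xy: "x \<in> {0<..}" "y \<in> {0<..}"
  have e: "c + ((1 - t) *\<^sub>R x + t *\<^sub>R y) = (1 - t) * (c + x) + t * (c + y)"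
    by (simp add: algebra_simps)
  have a1: "(1 - t) * (c + x) \<le> (1 - t) * max (c + x) 0" using t by (intro mult_left_mono) auto
  have a2: "t * (c + y) \<le> t * max (c + y) 0" using t by (intro mult_left_mono) auto
  have a3: "0 \<le> (1 - t) * max (c + x) 0" "0 \<le> t * max (c + y) 0" using t by auto
  have "max (c + ((1 - t) *\<^sub>R x + t *\<^sub>R y)) 0 \<le> (1 - t) * max (c + x) 0 + t * max (c + y) 0"
    unfolding e using a1 a2 a3 by linarith
  then have "h * max (c + ((1 - t) *\<^sub>R x + t *\<^sub>R y)) 0 \<le> h * ((1 - t) * max (c + x) 0 + t * max (c + y) 0)"
    using assms by (intro mult_left_mono) auto
  then show "h * max (c + ((1 - t) *\<^sub>R x + t *\<^sub>R y)) 0 \<le> (1 - t) * (h * max (c + x) 0) + t * (h * max (c + y) 0)"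
    by (simp add: algebra_simps)
qed simp

theorem theorem4:
  fixes h p K x0 :: real and d :: "nat \<Rightarrow> real"
  assumes "h > 0" and "p > 0" and "K > 0"
    and "\<And>i. i \<ge> 1 \<Longrightarrow> d i \<ge> 0"
    and "\<And>u1. u1 > 0 \<Longrightarrow> convergent (\<lambda>N. JN h p K x0 d N u1 / real N)"
  shows "convex_on {0<..} (\<lambda>u1. lim (\<lambda>N. JN h p K x0 d N u1 / real N))"
proof -
  define S where "S i = (\<Sum>k=1..i. d k)" for i
  have Smono: "S i \<le> S j" if "i \<le> j" for i j
    unfolding S_def by (rule sum_mono2) (use that assms(4) in auto)
  show ?thesis
  proof (cases "bdd_above (range S)")
    case True
    define D where "D = (SUP i. S i)"
    have SD: "S i \<le> D" for i unfolding D_def by (rule cSUP_upper) (use True in auto)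
    have Sconv: "\<exists>M. \<forall>i\<ge>M. D - e < S i" if "e > 0" for e
    proof -
      have "D - e < (SUP i. S i)" using that unfolding D_def by simp
      then obtain M where "D - e < S M" using less_cSUP_iff[of UNIV S] True by auto
      then show ?thesis using Smono by (meson order_less_le_trans)
    qed
    show ?thesis
    proof (rule convex_on_eqI[OF convex_g[OF assms(1), of "x0 - D"]])
      show "convex {0::real<..}" by simp
      fix a :: real assume "a \<in> {0<..}"
      then show "lim (\<lambda>N. JN h p K x0 d N a / real N) = h * max (x0 - D + a) 0"
        using case2[OF assms(1,2,3), of d D a x0] SD Sconv assms(5)[of a]
        unfolding S_def by (simp add: algebra_simps)
    qed
  next
    case False
    have unb: "\<exists>i. B < (\<Sum>k=1..i. d k)" for B
      using False unfolding S_def by (meson bdd_aboveI2 not_le)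
    have le: "lim (\<lambda>N. JN h p K x0 d N a / real N) \<le> lim (\<lambda>N. JN h p K x0 d N b / real N)"
      if ab: "a > 0" "b > 0" for a b
    proof -
      obtain C where C: "\<And>N. JN h p K x0 d N a \<le> JN h p K x0 d N b + C"
        using case1[OF assms(1,2,3,4) unb ab] by blast
      show ?thesis
      proof (rule lim_mono_C[OF assms(5)[OF ab(1)] assms(5)[OF ab(2)]])
        fix N
        have "JN h p K x0 d N a / real N \<le> (JN h p K x0 d N b + C) / real N"
          using C[of N] by (rule divide_right_mono) simp
        then show "JN h p K x0 d N a / real N \<le> JN h p K x0 d N b / real N + C / real N"
          by (simp add: add_divide_distrib)
      qed
    qed
    show ?thesis
    proof (rule convex_on_eqI[where g="\<lambda>_. lim (\<lambda>N. JN h p K x0 d N 1 / real N)"])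
      show "convex {0::real<..}" by simp
      then show "convex_on {0::real<..} (\<lambda>_. lim (\<lambda>N. JN h p K x0 d N 1 / real N))"
        by (simp add: convex_on_const)
      fix a :: real assume "a \<in> {0<..}"
      then show "lim (\<lambda>N. JN h p K x0 d N a / real N) = lim (\<lambda>N. JN h p K x0 d N 1 / real N)"
        using le[of a 1] le[of 1 a] by simp
    qed
  qed
qed

end
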